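(* For every $w_0\in M_N(\mathbb C)$, the Hamilton equation $$\dot w=|w|^q-|w^*|^q,\qquad w(0)=w_0$$ has a unique continuously differentiable solution $w:\mathbb R\to M_N(\mathbb C)$, defined for all $t\in\mathbb R$.
   Context: $p=2n\ge2$ is a fixed even integer and $q=p/(p-1)$. For $x\in M_N(\mathbb C)$, $|x|=(x^*x)^{1/2}$ and $|x^*|=(xx^* )^{1/2}$ (positive square roots), and $|x|^q$ is defined by functional calculus. *)

theory Defs
  imports "HOL-Analysis.Analysis"
begin

text \<open>Matrices in M_N(C) are represented as complex^'n^'n, with N = CARD('n).\<close>

definition mat_adj :: "complex^'n^'n \<Rightarrow> complex^'n^'n" where
  "mat_adj A = (\<chi> i j. cnj (A $ j $ i))"

definition mat_diag :: "('n \<Rightarrow> real) \<Rightarrow> complex^'n^'n" where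
  "mat_diag d = (\<chi> i j. if i = j then complex_of_real (d i) else 0)"

definition unitary_mat :: "complex^'n^'n \<Rightarrow> bool" where
  "unitary_mat U \<longleftrightarrow> mat_adj U ** U = mat 1 \<and> U ** mat_adj U = mat 1"

definition psd_pow :: "complex^'n^'n \<Rightarrow> real \<Rightarrow> complex^'n^'n" where
  "psd_pow H r = (SOME B. \<exists>U d. unitary_mat U \<and> (\<forall>i. d i \<ge> 0) \<and>
       H = U ** mat_diag d ** mat_adj U \<and>
       B = U ** mat_diag (\<lambda>i. d i powr r) ** mat_adj U)"

definition mat_abs :: "complex^'n^'n \<Rightarrow> complex^'n^'n" where
  "mat_abs x = psd_pow (mat_adj x ** x) (1/2)"

definition ham_field :: "real \<Rightarrow> complex^'n^'n \<Rightarrow> complex^'n^'n" where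
  "ham_field q w = psd_pow (mat_abs w) q - psd_pow (mat_abs (mat_adj w)) q"

end

theory Submission
  imports Defs
begin


lemma adj_nth[simp]: "mat_adj A $ i $ j = cnj (A $ j $ i)"
  by (simp add: mat_adj_def)

lemma adj_adj[simp]: "mat_adj (mat_adj A) = A"
  by (simp add: vec_eq_iff)

lemma mmult_nth: "(A ** B) $ i $ j = (\<Sum>k\<in>UNIV. A $ i $ k * B $ k $ j)"
  by (simp add: matrix_matrix_mult_def)

lemma adj_mult: "mat_adj (A ** B) = mat_adj B ** mat_adj A"
  by (simp add: vec_eq_iff mmult_nth mult.commute)

lemma adj_diff[simp]: "mat_adj (A - B) = mat_adj A - mat_adj B"
  by (simp add: vec_eq_iff)

lemma adj_add[simp]: "mat_adj (A + B) = mat_adj A + mat_adj B"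
  by (simp add: vec_eq_iff)

lemma adj_zero[simp]: "mat_adj 0 = 0"
  by (simp add: vec_eq_iff)

lemma adj_one[simp]: "mat_adj (mat 1) = mat 1"
  by (simp add: vec_eq_iff mat_def)

lemma diag_nth[simp]: "mat_diag d $ i $ j = (if i = j then complex_of_real (d i) else 0)"
  by (simp add: mat_diag_def)

lemma adj_diag[simp]: "mat_adj (mat_diag d) = mat_diag d"
  by (simp add: vec_eq_iff)

lemma diag_mult_nth[simp]: "(mat_diag d ** A) $ i $ j = d i * A $ i $ j"
proof -
  have "(mat_diag d ** A) $ i $ j = (\<Sum>k\<in>UNIV. if k = i then d i * A $ i $ j else 0)"
    unfolding mmult_nth by (intro sum.cong) auto
  thus ?thesis by simp
qed

lemma mult_diag_nth[simp]: "(A ** mat_diag d) $ i $ j = A $ i $ j * d j"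
proof -
  have "(A ** mat_diag d) $ i $ j = (\<Sum>k\<in>UNIV. if k = j then A $ i $ j * d j else 0)"
    unfolding mmult_nth by (intro sum.cong) auto
  thus ?thesis by simp
qed

definition tr :: "complex^'n^'n \<Rightarrow> complex" where
  "tr A = (\<Sum>i\<in>UNIV. A $ i $ i)"

lemma tr_comm: "tr (A ** B) = tr (B ** A)"
  unfolding tr_def mmult_nth
  by (subst sum.swap) (simp add: mult.commute)

lemma tr_diff: "tr (A - B) = tr A - tr B"
  by (simp add: tr_def sum_subtractf)

definition fro2 :: "complex^'n^'n \<Rightarrow> real" where
  "fro2 A = (\<Sum>i\<in>UNIV. \<Sum>j\<in>UNIV. (cmod (A $ i $ j))\<^sup>2)"

lemma norm_sq_fro2: "(norm A)\<^sup>2 = fro2 A"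
proof -
  have e: "(norm x)\<^sup>2 = (\<Sum>i\<in>UNIV. (norm (x $ i))\<^sup>2)" for x :: "'b::real_normed_vector^'m"
    unfolding norm_vec_def L2_set_def by (rule real_sqrt_pow2) (simp add: sum_nonneg)
  show ?thesis unfolding e fro2_def by simp
qed

lemma norm_fro2: "norm A = sqrt (fro2 A)"
  by (simp flip: norm_sq_fro2)

lemma fro2_tr: "fro2 A = Re (tr (mat_adj A ** A))"
  unfolding fro2_def tr_def mmult_nth
  apply (subst sum.swap)
  apply (simp add: Re_sum)
  apply (intro sum.cong refl)
  by (metis cmod_power2 power2_eq_square)

lemma fro2_adj: "fro2 (mat_adj A) = fro2 A"
  unfolding fro2_def by (subst sum.swap) simp

lemma norm_adj[simp]: "norm (mat_adj A) = norm A"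
  by (simp add: norm_fro2 fro2_adj)

lemma unitary_D1: "unitary_mat U \<Longrightarrow> mat_adj U ** U = mat 1"
  and unitary_D2: "unitary_mat U \<Longrightarrow> U ** mat_adj U = mat 1"
  by (auto simp: unitary_mat_def)

lemma unitary_adj: "unitary_mat U \<Longrightarrow> unitary_mat (mat_adj U)"
  by (simp add: unitary_mat_def)

lemma unitary_mult: "unitary_mat U \<Longrightarrow> unitary_mat V \<Longrightarrow> unitary_mat (U ** V)"
proof -
  assume U: "unitary_mat U" and V: "unitary_mat V"
  have "mat_adj V ** mat_adj U ** (U ** V) = mat_adj V ** (mat_adj U ** U) ** V"
    by (simp add: matrix_mul_assoc)
  also have "\<dots> = mat 1" using U V by (simp add: unitary_D1)
  finally have 1: "mat_adj (U ** V) ** (U ** V) = mat 1" by (simp add: adj_mult)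
  have "U ** V ** (mat_adj V ** mat_adj U) = U ** (V ** mat_adj V) ** mat_adj U"
    by (simp add: matrix_mul_assoc)
  also have "\<dots> = mat 1" using U V by (simp add: unitary_D2)
  finally have 2: "(U ** V) ** mat_adj (U ** V) = mat 1" by (simp add: adj_mult)
  show ?thesis using 1 2 by (simp add: unitary_mat_def)
qed

lemma unit_cancel1: "unitary_mat U \<Longrightarrow> A ** mat_adj U ** U = A"
  by (metis matrix_mul_assoc matrix_mul_rid unitary_D1)
lemma unit_cancel2: "unitary_mat U \<Longrightarrow> A ** U ** mat_adj U = A"
  by (metis matrix_mul_assoc matrix_mul_rid unitary_D2)

lemma fro2_unitary_left: "unitary_mat U \<Longrightarrow> fro2 (U ** A) = fro2 A"
proof -
  assume U: "unitary_mat U"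
  have "mat_adj A ** mat_adj U ** (U ** A) = mat_adj A ** (mat_adj U ** U) ** A"
    by (simp add: matrix_mul_assoc)
  thus ?thesis using U unfolding fro2_tr adj_mult by (simp add: unitary_D1)
qed

lemma fro2_unitary_right: "unitary_mat U \<Longrightarrow> fro2 (A ** U) = fro2 A"
proof -
  assume U: "unitary_mat U"
  have "tr (mat_adj (A ** U) ** (A ** U)) = tr ((mat_adj U ** (mat_adj A ** A)) ** U)"
    by (simp add: adj_mult matrix_mul_assoc)
  also have "\<dots> = tr (U ** (mat_adj U ** (mat_adj A ** A)))" by (rule tr_comm)
  also have "\<dots> = tr (mat_adj A ** A)"
    using U by (simp add: matrix_mul_assoc unitary_D2)
  finally show ?thesis unfolding fro2_tr by simp
qed

lemma norm_unitary_left: fixes A :: "complex^'n^'n" shows "unitary_mat U \<Longrightarrow> norm (U ** A) = norm A"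
  by (subst (1 2) norm_fro2) (simp add: fro2_unitary_left)

lemma norm_unitary_right: fixes A :: "complex^'n^'n" shows "unitary_mat U \<Longrightarrow> norm (A ** U) = norm A"
  by (subst (1 2) norm_fro2) (simp add: fro2_unitary_right)



definition cinner :: "complex^'n \<Rightarrow> complex^'n \<Rightarrow> complex" where
  "cinner x y = (\<Sum>i\<in>UNIV. x $ i * cnj (y $ i))"

lemma smult_nth[simp]: "(c *s x) $ i = c * (x $ i)"
  by (simp add: vector_scalar_mult_def)

lemma mvmult_nth: "(H *v x) $ i = (\<Sum>j\<in>UNIV. H $ i $ j * x $ j)"
  by (simp add: matrix_vector_mult_def)

lemma cinner_add_left: "cinner (x + y) z = cinner x z + cinner y z"
  by (simp add: cinner_def distrib_right sum.distrib)
lemma cinner_add_right: "cinner x (y + z) = cinner x y + cinner x z"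
  by (simp add: cinner_def distrib_left sum.distrib)
lemma cinner_diff_left: "cinner (x - y) z = cinner x z - cinner y z"
  by (simp add: cinner_def left_diff_distrib sum_subtractf)
lemma cinner_diff_right: "cinner x (y - z) = cinner x y - cinner x z"
  by (simp add: cinner_def right_diff_distrib sum_subtractf)
lemma cinner_smult_left: "cinner (c *s x) y = c * cinner x y"
  by (simp add: cinner_def sum_distrib_left mult.assoc)
lemma cinner_smult_right: "cinner x (c *s y) = cnj c * cinner x y"
  by (simp add: cinner_def sum_distrib_left algebra_simps)
lemma cinner_zero_left[simp]: "cinner 0 y = 0" by (simp add: cinner_def)
lemma cinner_zero_right[simp]: "cinner x 0 = 0" by (simp add: cinner_def)

lemma cinner_commute: "cinner y x = cnj (cinner x y)"
  by (simp add: cinner_def mult.commute)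

lemma cinner_self: "cinner x x = complex_of_real ((norm x)\<^sup>2)"
proof -
  have "(norm x)\<^sup>2 = (\<Sum>i\<in>UNIV. (cmod (x $ i))\<^sup>2)"
    unfolding norm_vec_def L2_set_def by (rule real_sqrt_pow2) (simp add: sum_nonneg)
  have "cinner x x = (\<Sum>i\<in>UNIV. complex_of_real ((cmod (x$i))\<^sup>2))"
    unfolding cinner_def by (rule sum.cong[OF refl]) (rule complex_norm_square[symmetric])
  also have "\<dots> = complex_of_real (\<Sum>i\<in>UNIV. (cmod (x$i))\<^sup>2)"
    by (rule of_real_sum[symmetric])
  finally show ?thesis using \<open>(norm x)\<^sup>2 = _\<close> by simp
qed

lemma Re_cinner_self: "Re (cinner x x) = (norm x)\<^sup>2"
  by (simp add: cinner_self)

lemma cinner_self_eq_0: "cinner x x = 0 \<longleftrightarrow> x = 0"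
  by (simp add: cinner_self)

lemma inner_cinner: "inner x y = Re (cinner x y)"
  by (simp add: inner_vec_def cinner_def inner_complex_def Re_sum)

lemma cinner_mv: "cinner (H *v x) y = cinner x (mat_adj H *v y)"
proof -
  have "cinner (H *v x) y = (\<Sum>i\<in>UNIV. \<Sum>j\<in>UNIV. H $ i $ j * x $ j * cnj (y $ i))"
    unfolding cinner_def mvmult_nth by (simp add: sum_distrib_right)
  also have "\<dots> = (\<Sum>j\<in>UNIV. \<Sum>i\<in>UNIV. H $ i $ j * x $ j * cnj (y $ i))"
    by (rule sum.swap)
  also have "\<dots> = cinner x (mat_adj H *v y)"
    unfolding cinner_def mvmult_nth by (simp add: sum_distrib_left mult_ac)
  finally show ?thesis .
qed

lemma real_lin_quad: fixes a C :: real
  assumes "\<And>t. 2 * t * a \<le> t\<^sup>2 * C" shows "a = 0"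
proof (rule ccontr)
  assume a: "a \<noteq> 0"
  define K where "K = \<bar>C\<bar> + 1"
  define t where "t = a / K"
  have pos: "K > 0" by (simp add: K_def)
  have "2 * t * a \<le> t\<^sup>2 * C" by (rule assms)
  moreover have "2 * t * a = 2*(a*a)/K" "t\<^sup>2 * C = (a*a)*C/(K*K)"
    by (simp_all add: t_def power2_eq_square)
  ultimately have "2*(a*a)/K * (K*K) \<le> (a*a)*C/(K*K) * (K*K)"
    by (intro mult_right_mono) auto
  moreover have "2*(a*a)/K * (K*K) = 2 * a * a * K" "(a*a)*C/(K*K) * (K*K) = a * a * C"
    using pos by (simp_all add: field_simps)
  ultimately have "2 * a * a * (\<bar>C\<bar> + 1) \<le> a * a * C" unfolding K_def by simp
  moreover have "a * a > 0" using a by (auto simp: zero_less_mult_iff linorder_neq_iff)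
  ultimately have "2 * (\<bar>C\<bar> + 1) \<le> C"
    by (metis mult.assoc mult.commute mult_le_cancel_left_pos)
  thus False by simp
qed



lemma mv_add: fixes H :: "complex^'n^'n" shows "H *v (x + y) = H *v x + H *v y"
  by (simp add: vec_eq_iff mvmult_nth distrib_left sum.distrib)
lemma mv_diff: fixes H :: "complex^'n^'n" shows "H *v (x - y) = H *v x - H *v y"
  by (simp add: vec_eq_iff mvmult_nth algebra_simps sum_subtractf)
lemma mv_smult: fixes H :: "complex^'n^'n" shows "H *v (c *s x) = c *s (H *v x)"
  by (simp add: vec_eq_iff mvmult_nth sum_distrib_left mult.left_commute)

lemma cont_cinner: "continuous_on UNIV (\<lambda>x::complex^'n. cinner x v)"
  unfolding cinner_def by (intro continuous_intros)

lemma cont_mv: "continuous_on UNIV (\<lambda>x::complex^'n. H *v x)"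
  unfolding matrix_vector_mult_def by (intro continuous_intros)

lemma exists_orth:
  fixes u :: "'n \<Rightarrow> complex^'n"
  assumes T: "finite T" "card T < CARD('n)"
  shows "\<exists>x. x \<noteq> 0 \<and> (\<forall>i\<in>T. cinner x (u i) = 0)"
proof -
  define S where "S = u ` T \<union> (\<lambda>i. \<i> *s u i) ` T"
  have fS: "finite S" using T by (simp add: S_def)
  have "card S \<le> card (u ` T) + card ((\<lambda>i. \<i> *s u i) ` T)"
    unfolding S_def by (rule card_Un_le)
  also have "\<dots> \<le> card T + card T" by (intro add_mono card_image_le T)
  finally have "card S < DIM(complex^'n)" using T by simp
  hence "dim S < DIM(complex^'n)" using dim_le_card'[OF fS] by linarith
  then obtain x :: "complex^'n" where x: "x \<noteq> 0" "\<And>y. y \<in> span S \<Longrightarrow> orthogonal x y"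
    using orthogonal_to_subspace_exists by blast
  have "cinner x (u i) = 0" if i: "i \<in> T" for i
  proof -
    have "u i \<in> S" "\<i> *s u i \<in> S" using i by (auto simp: S_def)
    hence "orthogonal x (u i)" "orthogonal x (\<i> *s u i)" using x(2) span_base by blast+
    hence "Re (cinner x (u i)) = 0" "Re (cinner x (\<i> *s u i)) = 0"
      by (simp_all add: orthogonal_def inner_cinner)
    thus ?thesis by (simp add: cinner_smult_right complex_eq_iff)
  qed
  thus ?thesis using x(1) by blast
qed

lemma quad_expand:
  fixes H :: "complex^'n^'n" and t :: real
  assumes herm: "mat_adj H = H"
  shows "Re (cinner (H *v (x + of_real t *s z)) (x + of_real t *s z)) =
         Re (cinner (H *v x) x) + 2 * t * Re (cinner (H *v x) z) + t\<^sup>2 * Re (cinner (H *v z) z)"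
proof -
  have c: "cinner (H *v z) x = cnj (cinner (H *v x) z)"
    by (metis cinner_commute cinner_mv herm)
  have "cinner (H *v (x + of_real t *s z)) (x + of_real t *s z) =
        cinner (H *v x) x + of_real t * cinner (H *v x) z + of_real t * cinner (H *v z) x
        + of_real t * of_real t * cinner (H *v z) z"
    by (simp add: mv_add mv_smult cinner_add_left cinner_add_right cinner_smult_left
        cinner_smult_right algebra_simps)
  thus ?thesis unfolding c by (simp add: power2_eq_square)
qed

lemma norm_expand:
  fixes t :: real and x z :: "complex^'n"
  shows "(norm (x + of_real t *s z))\<^sup>2 = (norm x)\<^sup>2 + 2 * t * Re (cinner x z) + t\<^sup>2 * (norm z)\<^sup>2"
  using quad_expand[of "mat 1 :: complex^'n^'n" x t z]
  by (simp add: Re_cinner_self)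

lemma norm_rsmult: "norm (complex_of_real r *s (y::complex^'n)) = \<bar>r\<bar> * norm y"
proof -
  have "(norm (complex_of_real r *s y))\<^sup>2 = Re (cinner (complex_of_real r *s y) (complex_of_real r *s y))"
    by (simp add: Re_cinner_self)
  also have "\<dots> = r * r * Re (cinner y y)"
    by (simp add: cinner_smult_left cinner_smult_right)
  also have "\<dots> = (\<bar>r\<bar> * norm y)\<^sup>2" by (simp add: Re_cinner_self power2_eq_square)
  finally have "(norm (complex_of_real r *s y))\<^sup>2 = (\<bar>r\<bar> * norm y)\<^sup>2" .
  thus ?thesis by (simp add: power2_eq_iff_nonneg)
qed

lemma eigen_step:
  fixes H :: "complex^'n^'n" and u :: "'n \<Rightarrow> complex^'n"
  assumes herm: "mat_adj H = H" and T: "finite T"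
    and eig: "\<And>i. i \<in> T \<Longrightarrow> H *v u i = of_real (l i) *s u i"
    and ne: "x1 \<noteq> 0" "\<forall>i\<in>T. cinner x1 (u i) = 0"
  shows "\<exists>x l0. norm x = 1 \<and> (\<forall>i\<in>T. cinner x (u i) = 0) \<and> H *v x = of_real l0 *s x"
proof -
  define W where "W = {x. \<forall>i\<in>T. cinner x (u i) = 0}"
  have W_add: "x + y \<in> W" if "x \<in> W" "y \<in> W" for x y
    using that by (simp add: W_def cinner_add_left)
  have W_smult: "c *s x \<in> W" if "x \<in> W" for x c
    using that by (simp add: W_def cinner_smult_left)
  have W_diff: "x - y \<in> W" if "x \<in> W" "y \<in> W" for x y
    using that by (simp add: W_def cinner_diff_left)
  have "closed W"
  proof -
    have "W = (\<Inter>i\<in>T. {x. cinner x (u i) = 0})" by (auto simp: W_def)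
    moreover have "closed {x. cinner x (u i) = 0}" for i
      using closed_Collect_eq[OF cont_cinner continuous_on_const] by blast
    ultimately show ?thesis by auto
  qed
  define S where "S = W \<inter> sphere 0 1"
  have "compact S" unfolding S_def by (intro closed_Int_compact \<open>closed W\<close> compact_sphere)
  define c1 where "c1 = complex_of_real (1 / norm x1)"
  have "c1 *s x1 \<in> S"
  proof -
    have "norm (c1 *s x1) = 1" using ne(1) unfolding c1_def norm_rsmult by simp
    moreover have "x1 \<in> W" using ne by (simp add: W_def)
    ultimately show ?thesis by (simp add: S_def W_smult)
  qed
  hence "S \<noteq> {}" by blast
  define f where "f x = Re (cinner (H *v x) x)" for x
  have "continuous_on S f" unfolding f_def cinner_def matrix_vector_mult_def
    by (intro continuous_intros)
  obtain x0 where x0: "x0 \<in> S" and mx: "\<And>y. y \<in> S \<Longrightarrow> f y \<le> f x0"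
    using continuous_attains_sup[OF \<open>compact S\<close> \<open>S \<noteq> {}\<close> \<open>continuous_on S f\<close>] by blast
  define lam where "lam = f x0"
  have Q: "f y \<le> lam * (norm y)\<^sup>2" if y: "y \<in> W" for y
  proof (cases "y = 0")
    case True thus ?thesis by (simp add: f_def)
  next
    case False
    define c where "c = complex_of_real (1 / norm y)"
    have ny: "norm y > 0" using False by simp
    have "norm (c *s y) = 1" using False unfolding c_def norm_rsmult by simp
    hence "c *s y \<in> S" using y by (simp add: S_def W_smult)
    hence "f (c *s y) \<le> lam" using mx lam_def by blast
    moreover have "f (c *s y) = f y / (norm y)\<^sup>2"
      by (simp add: f_def mv_smult cinner_smult_left cinner_smult_right c_def power2_eq_square
          mult.assoc)
    ultimately show ?thesis using ny by (simp add: divide_le_eq)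
  qed
  have nx0: "norm x0 = 1" "x0 \<in> W" using x0 by (auto simp: S_def)
  define z where "z = H *v x0 - of_real lam *s x0"
  have zW: "z \<in> W"
  proof -
    have "cinner (H *v x0) (u i) = 0" if i: "i \<in> T" for i
    proof -
      have "cinner (H *v x0) (u i) = cinner x0 (H *v u i)" by (simp add: cinner_mv herm)
      also have "\<dots> = 0" using eig[OF i] nx0(2) i by (simp add: cinner_smult_right W_def)
      finally show ?thesis .
    qed
    hence "H *v x0 \<in> W" by (simp add: W_def)
    thus ?thesis unfolding z_def using nx0 by (intro W_diff W_smult)
  qed
  have key: "2 * t * (norm z)\<^sup>2 \<le> t\<^sup>2 * (lam * (norm z)\<^sup>2 - Re (cinner (H *v z) z))" for t :: real
  proof -
    have "x0 + of_real t *s z \<in> W" using nx0 zW by (intro W_add W_smult)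
    from Q[OF this] have "f (x0 + of_real t *s z) \<le> lam * (norm (x0 + of_real t *s z))\<^sup>2" .
    hence "lam + 2 * t * Re (cinner (H *v x0) z) + t\<^sup>2 * Re (cinner (H *v z) z)
          \<le> lam * (1 + 2 * t * Re (cinner x0 z) + t\<^sup>2 * (norm z)\<^sup>2)"
      unfolding f_def quad_expand[OF herm] norm_expand using nx0 by (simp add: f_def lam_def)
    moreover have "Re (cinner (H *v x0) z) - lam * Re (cinner x0 z) = (norm z)\<^sup>2"
    proof -
      have "(norm z)\<^sup>2 = Re (cinner z z)" by (simp add: Re_cinner_self)
      also have "\<dots> = Re (cinner (H *v x0) z) - lam * Re (cinner x0 z)"
        unfolding z_def by (simp add: cinner_diff_left cinner_smult_left)
      finally show ?thesis by simp
    qed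
    ultimately show ?thesis by (simp add: algebra_simps)
  qed
  have "(norm z)\<^sup>2 = 0"
    by (rule real_lin_quad[of _ "lam * (norm z)\<^sup>2 - Re (cinner (H *v z) z)"]) (rule key)
  hence "z = 0" by simp
  hence "H *v x0 = of_real lam *s x0" by (simp add: z_def)
  thus ?thesis using nx0 by (auto simp: W_def)
qed



lemma orth_family:
  fixes H :: "complex^'n^'n" and T :: "'n set"
  assumes herm: "mat_adj H = H"
  shows "finite T \<Longrightarrow> \<exists>u l. (\<forall>i\<in>T. \<forall>j\<in>T. cinner (u i) (u j) = (if i = j then 1 else 0)) \<and>
            (\<forall>i\<in>T. H *v u i = of_real (l i) *s u i)"
proof (induction T rule: finite_induct)
  case empty thus ?case by simp
next
  case (insert a T)
  then obtain u l where on: "\<forall>i\<in>T. \<forall>j\<in>T. cinner (u i) (u j) = (if i = j then 1 else 0)"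
    and ev: "\<forall>i\<in>T. H *v u i = of_real (l i) *s u i" by blast
  have "card (insert a T) \<le> CARD('n)" by (rule card_mono) auto
  hence "card T < CARD('n)" using insert by simp
  then obtain x1 where x1: "x1 \<noteq> 0" "\<forall>i\<in>T. cinner x1 (u i) = 0"
    using exists_orth[OF insert(1)] by blast
  obtain x l0 where x: "norm x = 1" "\<forall>i\<in>T. cinner x (u i) = 0" "H *v x = of_real l0 *s x"
    using eigen_step[OF herm insert(1), of u l x1] ev x1 by blast
  have xx: "cinner x x = 1" using x(1) by (simp add: cinner_self)
  have xu: "cinner (u i) x = 0" if "i \<in> T" for i
    using x(2) that by (metis cinner_commute complex_cnj_zero)
  show ?case
    apply (rule exI[of _ "u(a := x)"], rule exI[of _ "l(a := l0)"])
    using on ev x xx xu insert(2) by auto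
qed

lemma spectral:
  fixes H :: "complex^'n^'n"
  assumes herm: "mat_adj H = H"
  shows "\<exists>U d. unitary_mat U \<and> H = U ** mat_diag d ** mat_adj U"
proof -
  have "\<exists>u l. (\<forall>i\<in>(UNIV::'n set). \<forall>j\<in>UNIV. cinner (u i) (u j) = (if i = j then 1 else 0)) \<and>
            (\<forall>i\<in>UNIV. H *v u i = of_real (l i) *s u i)"
    by (rule orth_family[OF herm]) simp
  then obtain u :: "'n \<Rightarrow> complex^'n" and l where "(\<forall>i\<in>(UNIV::'n set). \<forall>j\<in>UNIV. cinner (u i) (u j) = (if i = j then 1 else 0)) \<and>
            (\<forall>i\<in>(UNIV::'n set). H *v u i = of_real (l i) *s u i)" by blast
  hence on: "\<And>i j. cinner (u i) (u j) = (if i = j then 1 else 0)"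
    and ev: "\<And>i. H *v u i = of_real (l i) *s u i" by blast+
  define U :: "complex^'n^'n" where "U = (\<chi> i j. u j $ i)"
  have 1: "mat_adj U ** U = mat 1"
  proof -
    have "(mat_adj U ** U) $ i $ j = mat 1 $ i $ j" for i j
    proof -
      have "(mat_adj U ** U) $ i $ j = cinner (u j) (u i)"
        by (simp add: mmult_nth U_def cinner_def mult.commute)
      thus ?thesis using on by (simp add: mat_def)
    qed
    thus ?thesis by (simp add: vec_eq_iff)
  qed
  hence 2: "U ** mat_adj U = mat 1" by (simp add: matrix_left_right_inverse)
  have HU: "H ** U = U ** mat_diag l"
  proof -
    have "(H ** U) $ i $ j = (U ** mat_diag l) $ i $ j" for i j
    proof -
      have "(H ** U) $ i $ j = (H *v u j) $ i" by (simp add: mmult_nth mvmult_nth U_def)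
      thus ?thesis using ev by (simp add: U_def mult.commute)
    qed
    thus ?thesis by (simp add: vec_eq_iff)
  qed
  have "H = H ** (U ** mat_adj U)" using 2 by simp
  also have "\<dots> = U ** mat_diag l ** mat_adj U" by (simp add: matrix_mul_assoc HU)
  finally show ?thesis using 1 2 by (auto simp: unitary_mat_def)
qed



lemma diag_intertwine:
  assumes "mat_diag d ** W = W ** mat_diag e"
  shows "mat_diag (\<lambda>i. f (d i)) ** W = W ** mat_diag (\<lambda>i. f (e i))"
proof -
  have "(mat_diag (\<lambda>i. f (d i)) ** W) $ i $ j = (W ** mat_diag (\<lambda>i. f (e i))) $ i $ j" for i j
  proof -
    have "complex_of_real (d i) * W $ i $ j = W $ i $ j * complex_of_real (e j)"
      using assms by (metis diag_mult_nth mult_diag_nth)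
    hence "W $ i $ j = 0 \<or> d i = e j" by (auto simp: mult.commute)
    thus ?thesis by (auto simp: mult.commute)
  qed
  thus ?thesis by (simp add: vec_eq_iff)
qed

lemma fc_intertwine:
  assumes U: "unitary_mat U" and V: "unitary_mat V"
    and HX: "(U ** mat_diag d ** mat_adj U) ** X = X ** (V ** mat_diag e ** mat_adj V)"
  shows "(U ** mat_diag (\<lambda>i. f (d i)) ** mat_adj U) ** X = X ** (V ** mat_diag (\<lambda>i. f (e i)) ** mat_adj V)"
proof -
  define W where "W = mat_adj U ** X ** V"
  have "mat_diag d ** W = mat_adj U ** ((U ** mat_diag d ** mat_adj U) ** X) ** V"
    using U by (simp add: W_def matrix_mul_assoc unitary_D1 unit_cancel1)
  also have "\<dots> = mat_adj U ** (X ** (V ** mat_diag e ** mat_adj V)) ** V" by (simp add: HX)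
  also have "\<dots> = W ** mat_diag e"
    using V by (simp add: W_def matrix_mul_assoc unitary_D1 unit_cancel1)
  finally have "mat_diag (\<lambda>i. f (d i)) ** W = W ** mat_diag (\<lambda>i. f (e i))"
    by (rule diag_intertwine)
  hence "U ** (mat_diag (\<lambda>i. f (d i)) ** W) ** mat_adj V = U ** (W ** mat_diag (\<lambda>i. f (e i))) ** mat_adj V"
    by simp
  thus ?thesis using U V by (simp add: W_def matrix_mul_assoc unitary_D2 unit_cancel2)
qed

lemma fc_unique:
  assumes U: "unitary_mat U" and V: "unitary_mat V"
    and "U ** mat_diag d ** mat_adj U = V ** mat_diag e ** mat_adj V"
  shows "U ** mat_diag (\<lambda>i. f (d i)) ** mat_adj U = V ** mat_diag (\<lambda>i. f (e i)) ** mat_adj V"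
  using fc_intertwine[OF U V, of d "mat 1" e f] assms(3) by simp

lemma psd_pow_eq:
  assumes U: "unitary_mat U" and d: "\<And>i. d i \<ge> 0" and H: "H = U ** mat_diag d ** mat_adj U"
  shows "psd_pow H r = U ** mat_diag (\<lambda>i. d i powr r) ** mat_adj U"
proof -
  let ?P = "\<lambda>B. \<exists>U d. unitary_mat U \<and> (\<forall>i. d i \<ge> 0) \<and>
       H = U ** mat_diag d ** mat_adj U \<and> B = U ** mat_diag (\<lambda>i. d i powr r) ** mat_adj U"
  have "?P (U ** mat_diag (\<lambda>i. d i powr r) ** mat_adj U)" using U d H by blast
  hence "?P (psd_pow H r)" unfolding psd_pow_def by (rule someI)
  then obtain U' d' where U': "unitary_mat U'" "H = U' ** mat_diag d' ** mat_adj U'"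
    and B: "psd_pow H r = U' ** mat_diag (\<lambda>i. d' i powr r) ** mat_adj U'" by blast
  have eq: "U' ** mat_diag d' ** mat_adj U' = U ** mat_diag d ** mat_adj U" using U'(2) H by metis
  show ?thesis unfolding B using fc_unique[OF U'(1) U eq] .
qed

lemma adjx_x_diag:
  fixes x :: "complex^'n^'n"
  obtains V s where "unitary_mat V" "\<And>i. s i \<ge> 0"
    "mat_adj x ** x = V ** mat_diag (\<lambda>i. (s i)\<^sup>2) ** mat_adj V"
proof -
  obtain V d where V: "unitary_mat V" and H: "mat_adj x ** x = V ** mat_diag d ** mat_adj V"
    using spectral[of "mat_adj x ** x"] by (auto simp: adj_mult)
  have "mat_adj V ** (mat_adj x ** x) ** V = mat_diag d"
    using V unfolding H by (simp add: matrix_mul_assoc unitary_D1 unit_cancel1)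
  hence dd: "mat_diag d = mat_adj (x ** V) ** (x ** V)" by (simp add: adj_mult matrix_mul_assoc)
  have d0: "d i \<ge> 0" for i
  proof -
    have "complex_of_real (d i) = (mat_adj (x ** V) ** (x ** V)) $ i $ i"
      by (simp flip: dd)
    also have "\<dots> = (\<Sum>k\<in>UNIV. complex_of_real ((cmod ((x ** V) $ k $ i))\<^sup>2))"
      unfolding mmult_nth adj_nth by (rule sum.cong[OF refl]) (simp add: complex_norm_square mult.commute del: of_real_power)
    also have "\<dots> = complex_of_real (\<Sum>k\<in>UNIV. (cmod ((x ** V) $ k $ i))\<^sup>2)"
      by (rule of_real_sum[symmetric])
    finally have "d i = (\<Sum>k\<in>UNIV. (cmod ((x ** V) $ k $ i))\<^sup>2)" using of_real_eq_iff by blast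
    thus ?thesis by (simp add: sum_nonneg)
  qed
  show ?thesis
  proof (rule that[OF V, of "\<lambda>i. sqrt (d i)"])
    show "sqrt (d i) \<ge> 0" for i using d0 by simp
    show "mat_adj x ** x = V ** mat_diag (\<lambda>i. (sqrt (d i))\<^sup>2) ** mat_adj V"
      using H d0 by simp
  qed
qed

lemma abs_pow_diag:
  fixes x :: "complex^'n^'n"
  assumes "q > 0"
  obtains V s where "unitary_mat V" "\<And>i. s i \<ge> 0"
    "mat_adj x ** x = V ** mat_diag (\<lambda>i. (s i)\<^sup>2) ** mat_adj V"
    "psd_pow (mat_abs x) q = V ** mat_diag (\<lambda>i. s i powr q) ** mat_adj V"
proof -
  obtain V s where V: "unitary_mat V" and s: "\<And>i. s i \<ge> 0"
    and H: "mat_adj x ** x = V ** mat_diag (\<lambda>i. (s i)\<^sup>2) ** mat_adj V"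
    using adjx_x_diag[of x] by blast
  have "mat_abs x = V ** mat_diag (\<lambda>i. ((s i)\<^sup>2) powr (1/2)) ** mat_adj V"
    unfolding mat_abs_def using V H by (intro psd_pow_eq) auto
  also have "(\<lambda>i. ((s i)\<^sup>2) powr (1/2)) = s"
    using s by (auto simp: powr_half_sqrt)
  finally have A: "mat_abs x = V ** mat_diag s ** mat_adj V" .
  have P: "psd_pow (mat_abs x) q = V ** mat_diag (\<lambda>i. s i powr q) ** mat_adj V"
    using V s A by (intro psd_pow_eq) auto
  show ?thesis by (rule that[OF V s H P])
qed



lemma mm_diff_l: fixes A :: "complex^'n^'n" shows "A ** (B - C) = A ** B - A ** C"
  by (simp add: vec_eq_iff mmult_nth algebra_simps sum_subtractf)
lemma mm_diff_r: fixes A :: "complex^'n^'n" shows "(A - B) ** C = A ** C - B ** C"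
  by (simp add: vec_eq_iff mmult_nth algebra_simps sum_subtractf)
lemma mm_add_r: fixes A :: "complex^'n^'n" shows "(A + B) ** C = A ** C + B ** C"
  by (simp add: vec_eq_iff mmult_nth algebra_simps sum.distrib)
lemma tr_add: "tr (A + B) = tr A + tr B"
  by (simp add: tr_def sum.distrib)

lemma diag_diag: "mat_diag a ** mat_diag b = mat_diag (\<lambda>i. a i * b i)"
  by (simp add: vec_eq_iff)

lemma adjM_M_diag: fixes M :: "complex^'n^'n"
  shows "(mat_adj M ** M) $ j $ j = complex_of_real (\<Sum>i\<in>UNIV. (cmod (M $ i $ j))\<^sup>2)"
proof -
  have "(mat_adj M ** M) $ j $ j = (\<Sum>i\<in>UNIV. complex_of_real ((cmod (M $ i $ j))\<^sup>2))"
    unfolding mmult_nth adj_nth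
    by (rule sum.cong[OF refl]) (simp add: complex_norm_square mult.commute del: of_real_power)
  also have "\<dots> = complex_of_real (\<Sum>i\<in>UNIV. (cmod (M $ i $ j))\<^sup>2)"
    by (rule of_real_sum[symmetric])
  finally show ?thesis .
qed

lemma M_adjM_diag: fixes M :: "complex^'n^'n"
  shows "(M ** mat_adj M) $ i $ i = complex_of_real (\<Sum>j\<in>UNIV. (cmod (M $ i $ j))\<^sup>2)"
  using adjM_M_diag[of "mat_adj M" i] by simp

lemma tr_diag: "tr (mat_diag d) = complex_of_real (\<Sum>i\<in>UNIV. d i)"
  by (simp add: tr_def)

lemma bessel:
  fixes c d :: "complex^'n^'n"
  assumes cc: "mat_adj c ** c = mat_diag (\<lambda>i. (s i)\<^sup>2)"
  shows "(\<Sum>i\<in>UNIV. (if s i = 0 then 0 else (cmod ((mat_adj c ** d) $ i $ j))\<^sup>2 / (s i)\<^sup>2))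
         \<le> Re ((mat_adj d ** d) $ j $ j)"
proof -
  define w where "w i = (if s i = 0 then 0 else 1 / (s i)\<^sup>2)" for i
  define W where "W = mat_diag w"
  define P where "P = c ** W ** mat_adj c"
  define \<beta> where "\<beta> = mat_adj c ** d"
  have WDW: "W ** mat_diag (\<lambda>i. (s i)\<^sup>2) ** W = W"
    unfolding W_def diag_diag by (rule arg_cong[where f=mat_diag]) (auto simp: w_def fun_eq_iff power2_eq_square)
  have PP: "P ** P = P"
  proof -
    have "P ** P = c ** W ** (mat_adj c ** c) ** W ** mat_adj c"
      by (simp add: P_def matrix_mul_assoc)
    also have "\<dots> = c ** (W ** mat_diag (\<lambda>i. (s i)\<^sup>2) ** W) ** mat_adj c"
      by (simp add: cc matrix_mul_assoc)
    finally show ?thesis by (simp add: WDW P_def)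
  qed
  have aP: "mat_adj P = P" by (simp add: P_def adj_mult W_def matrix_mul_assoc)
  define R where "R = mat 1 - P"
  have RR: "mat_adj R ** R = R"
    by (simp add: R_def aP mm_diff_l mm_diff_r PP)
  have "mat_adj (R ** d) ** (R ** d) = mat_adj d ** d - mat_adj \<beta> ** W ** \<beta>"
  proof -
    have "mat_adj (R ** d) ** (R ** d) = mat_adj d ** (mat_adj R ** R) ** d"
      by (simp add: adj_mult matrix_mul_assoc)
    also have "\<dots> = mat_adj d ** R ** d" by (simp only: RR)
    also have "\<dots> = mat_adj d ** d - mat_adj d ** P ** d"
      by (simp add: R_def mm_diff_l mm_diff_r)
    also have "mat_adj d ** P ** d = mat_adj \<beta> ** W ** \<beta>"
      by (simp add: P_def \<beta>_def adj_mult matrix_mul_assoc)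
    finally show ?thesis .
  qed
  hence e: "(mat_adj (R ** d) ** (R ** d)) $ j $ j = (mat_adj d ** d) $ j $ j - (mat_adj \<beta> ** W ** \<beta>) $ j $ j"
    by simp
  have "Re ((mat_adj d ** d) $ j $ j - (mat_adj \<beta> ** W ** \<beta>) $ j $ j) = (\<Sum>i\<in>UNIV. (cmod ((R ** d) $ i $ j))\<^sup>2)"
    unfolding e[symmetric] by (simp only: adjM_M_diag Re_complex_of_real)
  hence "Re ((mat_adj d ** d) $ j $ j) - Re ((mat_adj \<beta> ** W ** \<beta>) $ j $ j) \<ge> 0"
    by (simp add: sum_nonneg)
  moreover have "(mat_adj \<beta> ** W ** \<beta>) $ j $ j =
     complex_of_real (\<Sum>i\<in>UNIV. (if s i = 0 then 0 else (cmod (\<beta> $ i $ j))\<^sup>2 / (s i)\<^sup>2))"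
  proof -
    have "(mat_adj \<beta> ** W ** \<beta>) $ j $ j = (\<Sum>i\<in>UNIV. complex_of_real (if s i = 0 then 0 else (cmod (\<beta> $ i $ j))\<^sup>2 / (s i)\<^sup>2))"
      apply (subst mmult_nth)
      apply (rule sum.cong[OF refl])
      by (simp add: W_def w_def complex_norm_square mult.commute del: of_real_power)
    also have "\<dots> = complex_of_real (\<Sum>i\<in>UNIV. (if s i = 0 then 0 else (cmod (\<beta> $ i $ j))\<^sup>2 / (s i)\<^sup>2))" by (rule of_real_sum[symmetric])
    finally show ?thesis .
  qed
  ultimately have "(\<Sum>i\<in>UNIV. (if s i = 0 then 0 else (cmod (\<beta> $ i $ j))\<^sup>2 / (s i)\<^sup>2))
         \<le> Re ((mat_adj d ** d) $ j $ j)" by simp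
  thus ?thesis unfolding \<beta>_def .
qed



lemma pointwise_ineq:
  fixes a b :: complex and s t :: real
  assumes s: "s > 0" and t: "t > 0"
  shows "4 * Re (cnj a * b) \<le> 2 * s * t * (cmod a)\<^sup>2 + (cmod b)\<^sup>2 / s\<^sup>2 + (cmod b)\<^sup>2 / t\<^sup>2"
proof -
  define p where "p = cmod a"
  define q where "q = cmod b"
  have "Re (cnj a * b) \<le> cmod (cnj a * b)" by (rule complex_Re_le_cmod)
  also have "\<dots> = p * q" by (simp add: p_def q_def norm_mult)
  finally have 1: "Re (cnj a * b) \<le> p * q" .
  have "0 \<le> 2 * s * t * (s * t * p - q)\<^sup>2 + q\<^sup>2 * (s - t)\<^sup>2"
    using s t by (intro add_nonneg_nonneg mult_nonneg_nonneg) auto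
  hence "4 * p * q * (s\<^sup>2 * t\<^sup>2) \<le> 2 * s * t * p\<^sup>2 * (s\<^sup>2 * t\<^sup>2) + q\<^sup>2 * t\<^sup>2 + q\<^sup>2 * s\<^sup>2"
    by (simp add: power2_eq_square algebra_simps)
  hence "4 * p * q \<le> 2 * s * t * p\<^sup>2 + q\<^sup>2 / s\<^sup>2 + q\<^sup>2 / t\<^sup>2"
    using s t by (simp add: field_simps power2_eq_square)
  thus ?thesis using 1 unfolding p_def q_def by linarith
qed

lemma col_zero:
  fixes c :: "complex^'n^'n"
  assumes "(mat_adj c ** c) $ i $ i = 0"
  shows "c $ k $ i = 0"
proof -
  have "complex_of_real (\<Sum>k\<in>UNIV. (cmod (c $ k $ i))\<^sup>2) = 0"
    using assms unfolding adjM_M_diag .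
  hence "(\<Sum>k\<in>UNIV. (cmod (c $ k $ i))\<^sup>2) = 0" by (simp only: of_real_eq_0_iff)
  hence "(cmod (c $ k $ i))\<^sup>2 = 0" by (subst (asm) sum_nonneg_eq_0_iff) auto
  thus ?thesis by simp
qed

lemma core_ineq:
  fixes x y V Q :: "complex^'n^'n"
  assumes V: "unitary_mat V" and Q: "unitary_mat Q"
    and Hx: "mat_adj x ** x = V ** mat_diag (\<lambda>i. (s i)\<^sup>2) ** mat_adj V"
    and Hy: "mat_adj y ** y = Q ** mat_diag (\<lambda>i. (t i)\<^sup>2) ** mat_adj Q"
    and s0: "\<And>i. s i \<ge> 0" and t0: "\<And>j. t j \<ge> 0"
  shows "(\<Sum>i\<in>UNIV. \<Sum>j\<in>UNIV. (s i - t j)\<^sup>2 * (cmod ((mat_adj V ** Q) $ i $ j))\<^sup>2)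
         \<le> 2 * (norm (x - y))\<^sup>2"
proof -
  define A where "A = mat_adj V ** Q"
  define c where "c = x ** V"
  define d where "d = y ** Q"
  define \<beta> where "\<beta> = mat_adj c ** d"
  define a2 where "a2 i j = (cmod (A $ i $ j))\<^sup>2" for i j
  define S where "S = (\<Sum>i\<in>UNIV. \<Sum>j\<in>UNIV. cnj (A $ i $ j) * \<beta> $ i $ j)"
  have cc: "mat_adj c ** c = mat_diag (\<lambda>i. (s i)\<^sup>2)"
  proof -
    have "mat_adj c ** c = mat_adj V ** (mat_adj x ** x) ** V"
      by (simp add: c_def adj_mult matrix_mul_assoc)
    also have "\<dots> = mat_adj V ** V ** mat_diag (\<lambda>i. (s i)\<^sup>2) ** (mat_adj V ** V)"
      by (simp add: Hx matrix_mul_assoc)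
    finally show ?thesis using V by (simp add: unitary_D1)
  qed
  have dd: "mat_adj d ** d = mat_diag (\<lambda>i. (t i)\<^sup>2)"
  proof -
    have "mat_adj d ** d = mat_adj Q ** (mat_adj y ** y) ** Q"
      by (simp add: d_def adj_mult matrix_mul_assoc)
    also have "\<dots> = mat_adj Q ** Q ** mat_diag (\<lambda>i. (t i)\<^sup>2) ** (mat_adj Q ** Q)"
      by (simp add: Hy matrix_mul_assoc)
    finally show ?thesis using Q by (simp add: unitary_D1)
  qed
  have AU: "unitary_mat A" unfolding A_def using V Q by (intro unitary_mult unitary_adj)
  have row: "(\<Sum>j\<in>UNIV. a2 i j) = 1" for i
  proof -
    have "complex_of_real (\<Sum>j\<in>UNIV. a2 i j) = (A ** mat_adj A) $ i $ i"
      by (simp add: M_adjM_diag a2_def)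
    also have "\<dots> = 1" using AU by (simp add: unitary_D2 mat_def)
    finally show ?thesis by (metis of_real_eq_1_iff)
  qed
  have col: "(\<Sum>i\<in>UNIV. a2 i j) = 1" for j
  proof -
    have "complex_of_real (\<Sum>i\<in>UNIV. a2 i j) = (mat_adj A ** A) $ j $ j"
      by (simp add: adjM_M_diag a2_def)
    also have "\<dots> = 1" using AU by (simp add: unitary_D1 mat_def)
    finally show ?thesis by (metis of_real_eq_1_iff)
  qed
  have "(x - y) ** Q = c ** A - d"
    using V by (simp add: mm_diff_r c_def A_def d_def matrix_mul_assoc unit_cancel2)
  hence N: "(norm (x - y))\<^sup>2 = fro2 (c ** A - d)"
    using Q by (metis fro2_unitary_right norm_sq_fro2)
  have "mat_adj (c ** A - d) ** (c ** A - d) =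
        mat_adj A ** (mat_adj c ** c) ** A - mat_adj A ** \<beta> - mat_adj \<beta> ** A + mat_adj d ** d"
    by (simp add: adj_mult mm_diff_l mm_diff_r \<beta>_def matrix_mul_assoc)
  hence "tr (mat_adj (c ** A - d) ** (c ** A - d)) =
        tr (mat_adj A ** (mat_adj c ** c) ** A) - tr (mat_adj A ** \<beta>) - tr (mat_adj \<beta> ** A) + tr (mat_adj d ** d)"
    by (simp add: tr_add tr_diff)
  moreover have "tr (mat_adj A ** (mat_adj c ** c) ** A) = tr (mat_adj c ** c)"
  proof -
    have "tr (mat_adj A ** (mat_adj c ** c) ** A) = tr (A ** (mat_adj A ** (mat_adj c ** c)))"
      by (rule tr_comm)
    also have "\<dots> = tr (mat_adj c ** c)" using AU by (simp add: matrix_mul_assoc unitary_D2)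
    finally show ?thesis .
  qed
  moreover have "tr (mat_adj A ** \<beta>) = S"
    unfolding tr_def mmult_nth S_def by (subst sum.swap) simp
  moreover have "tr (mat_adj \<beta> ** A) = cnj S"
    unfolding tr_def mmult_nth S_def by (subst sum.swap) (simp add: mult.commute)
  ultimately have F: "(norm (x - y))\<^sup>2 = (\<Sum>i\<in>UNIV. (s i)\<^sup>2) + (\<Sum>j\<in>UNIV. (t j)\<^sup>2) - 2 * Re S"
    unfolding N fro2_tr cc dd tr_diag by simp
  have "(\<Sum>i\<in>UNIV. \<Sum>j\<in>UNIV. (s i - t j)\<^sup>2 * a2 i j) =
        (\<Sum>i\<in>UNIV. \<Sum>j\<in>UNIV. (s i)\<^sup>2 * a2 i j) + (\<Sum>i\<in>UNIV. \<Sum>j\<in>UNIV. (t j)\<^sup>2 * a2 i j)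
        - 2 * (\<Sum>i\<in>UNIV. \<Sum>j\<in>UNIV. s i * t j * a2 i j)"
    by (simp add: power2_diff algebra_simps sum.distrib sum_subtractf sum_distrib_left)
  also have "(\<Sum>i\<in>UNIV. \<Sum>j\<in>UNIV. (s i)\<^sup>2 * a2 i j) = (\<Sum>i\<in>UNIV. (s i)\<^sup>2)"
    by (simp add: row flip: sum_distrib_left)
  also have "(\<Sum>i\<in>UNIV. \<Sum>j\<in>UNIV. (t j)\<^sup>2 * a2 i j) = (\<Sum>j\<in>UNIV. (t j)\<^sup>2)"
    by (subst sum.swap) (simp add: col flip: sum_distrib_left)
  finally have L: "(\<Sum>i\<in>UNIV. \<Sum>j\<in>UNIV. (s i - t j)\<^sup>2 * a2 i j) =
      (\<Sum>i\<in>UNIV. (s i)\<^sup>2) + (\<Sum>j\<in>UNIV. (t j)\<^sup>2) - 2 * (\<Sum>i\<in>UNIV. \<Sum>j\<in>UNIV. s i * t j * a2 i j)" .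
  define g where "g i j = (if s i = 0 then 0 else (cmod (\<beta> $ i $ j))\<^sup>2 / (s i)\<^sup>2)" for i j
  define h where "h i j = (if t j = 0 then 0 else (cmod (\<beta> $ i $ j))\<^sup>2 / (t j)\<^sup>2)" for i j
  have B1: "(\<Sum>i\<in>UNIV. g i j) \<le> (t j)\<^sup>2" for j
    using bessel[OF cc, of d j] unfolding g_def \<beta>_def dd by simp
  have B2: "(\<Sum>j\<in>UNIV. h i j) \<le> (s i)\<^sup>2" for i
  proof -
    have eq: "mat_adj d ** c = mat_adj \<beta>" by (simp add: \<beta>_def adj_mult)
    have e2: "cmod ((mat_adj d ** c) $ j $ i) = cmod (\<beta> $ i $ j)" for j using eq by simp
    have e3: "Re ((mat_adj c ** c) $ i $ i) = (s i)\<^sup>2" unfolding cc by simp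
    from bessel[OF dd, of c i] show ?thesis unfolding h_def e2 e3 .
  qed
  have B0: "\<beta> $ i $ j = 0" if "s i = 0 \<or> t j = 0" for i j
  proof (cases "s i = 0")
    case True
    hence "c $ k $ i = 0" for k using cc col_zero[of c i k] by simp
    thus ?thesis by (simp add: \<beta>_def mmult_nth)
  next
    case False
    hence "t j = 0" using that by simp
    hence "d $ k $ j = 0" for k using dd col_zero[of d j k] by simp
    thus ?thesis by (simp add: \<beta>_def mmult_nth)
  qed
  have PW: "4 * Re (cnj (A $ i $ j) * \<beta> $ i $ j) \<le> 2 * s i * t j * a2 i j + g i j + h i j"
    for i j
  proof (cases "s i = 0 \<or> t j = 0")
    case True
    thus ?thesis using B0[OF True] s0[of i] t0[of j]
      by (auto simp: g_def h_def a2_def intro!: add_nonneg_nonneg mult_nonneg_nonneg)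
  next
    case False
    hence "s i > 0" "t j > 0" using s0[of i] t0[of j] by auto
    thus ?thesis using pointwise_ineq[of "s i" "t j" "A $ i $ j" "\<beta> $ i $ j"] False
      by (simp add: g_def h_def a2_def)
  qed
  have "4 * Re S = (\<Sum>i\<in>UNIV. \<Sum>j\<in>UNIV. 4 * Re (cnj (A $ i $ j) * \<beta> $ i $ j))"
    by (simp add: S_def Re_sum sum_distrib_left)
  also have "\<dots> \<le> (\<Sum>i\<in>UNIV. \<Sum>j\<in>UNIV. 2 * s i * t j * a2 i j + g i j + h i j)"
    by (intro sum_mono PW)
  also have "\<dots> = 2 * (\<Sum>i\<in>UNIV. \<Sum>j\<in>UNIV. s i * t j * a2 i j)
      + (\<Sum>j\<in>UNIV. \<Sum>i\<in>UNIV. g i j) + (\<Sum>i\<in>UNIV. \<Sum>j\<in>UNIV. h i j)"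
    by (simp add: sum.distrib sum_distrib_left mult.assoc sum.swap[of g])
  also have "\<dots> \<le> 2 * (\<Sum>i\<in>UNIV. \<Sum>j\<in>UNIV. s i * t j * a2 i j)
      + (\<Sum>j\<in>UNIV. (t j)\<^sup>2) + (\<Sum>i\<in>UNIV. (s i)\<^sup>2)"
    by (intro add_mono order_refl sum_mono B1 B2)
  finally have "4 * Re S \<le> 2 * (\<Sum>i\<in>UNIV. \<Sum>j\<in>UNIV. s i * t j * a2 i j)
      + (\<Sum>j\<in>UNIV. (t j)\<^sup>2) + (\<Sum>i\<in>UNIV. (s i)\<^sup>2)" .
  hence "(\<Sum>i\<in>UNIV. \<Sum>j\<in>UNIV. (s i - t j)\<^sup>2 * a2 i j) \<le> 2 * (norm (x - y))\<^sup>2"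
    unfolding L F by argo
  thus ?thesis by (simp add: a2_def A_def)
qed



lemma powr_lip:
  fixes a b R q :: real
  assumes q: "q \<ge> 1" and a: "0 \<le> a" "a \<le> R" and b: "0 \<le> b" "b \<le> R"
  shows "\<bar>a powr q - b powr q\<bar> \<le> q * R powr (q - 1) * \<bar>a - b\<bar>"
proof -
  have main: "\<bar>u powr q - v powr q\<bar> \<le> q * R powr (q - 1) * \<bar>u - v\<bar>"
    if uv: "0 \<le> v" "v < u" "u \<le> R" for u v
  proof -
    have cont: "continuous_on {v..u} (\<lambda>x. x powr q)"
      using uv q by (intro continuous_on_powr') (auto intro!: continuous_intros)
    have dif: "(\<lambda>x. x powr q) differentiable (at x)" if "v < x" "x < u" for x
      using that uv has_real_derivative_powr[of x q] real_differentiable_def by fastforce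
    obtain l z where z: "v < z" "z < u" "DERIV (\<lambda>x. x powr q) z :> l"
      and eq: "u powr q - v powr q = (u - v) * l"
      using MVT[OF uv(2) cont dif] by blast
    have "l = q * z powr (q - 1)"
      using DERIV_unique[OF z(3) has_real_derivative_powr[of z q]] z uv by simp
    hence "0 \<le> l" "l \<le> q * R powr (q - 1)"
      using z uv q by (auto intro!: mult_left_mono powr_mono2)
    thus ?thesis using eq uv by (simp add: abs_mult)
  qed
  show ?thesis
  proof (cases a b rule: linorder_cases)
    case less thus ?thesis using main[of a b] a b by (simp add: abs_minus_commute)
  next
    case equal thus ?thesis by simp
  next
    case greater thus ?thesis using main[of b a] a b by simp
  qed
qed

lemma fc_lip:
  fixes x y V Q :: "complex^'n^'n"
  assumes V: "unitary_mat V" and Q: "unitary_mat Q"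
    and Hx: "mat_adj x ** x = V ** mat_diag (\<lambda>i. (s i)\<^sup>2) ** mat_adj V"
    and Hy: "mat_adj y ** y = Q ** mat_diag (\<lambda>i. (t i)\<^sup>2) ** mat_adj Q"
    and s0: "\<And>i. s i \<ge> 0" and t0: "\<And>j. t j \<ge> 0"
    and L: "L \<ge> 0" and lip: "\<And>i j. \<bar>f (s i) - f (t j)\<bar> \<le> L * \<bar>s i - t j\<bar>"
  shows "norm (V ** mat_diag (\<lambda>i. f (s i)) ** mat_adj V - Q ** mat_diag (\<lambda>i. f (t i)) ** mat_adj Q)
         \<le> sqrt 2 * L * norm (x - y)"
proof -
  define A where "A = mat_adj V ** Q"
  define M where "M = V ** mat_diag (\<lambda>i. f (s i)) ** mat_adj V - Q ** mat_diag (\<lambda>i. f (t i)) ** mat_adj Q"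
  have "mat_adj V ** M ** Q = mat_diag (\<lambda>i. f (s i)) ** A - A ** mat_diag (\<lambda>i. f (t i))"
    using V Q by (simp add: M_def A_def mm_diff_l mm_diff_r matrix_mul_assoc unitary_D1 unit_cancel1)
  moreover have "norm (mat_adj V ** M ** Q) = norm M"
    using V Q by (simp add: norm_unitary_right norm_unitary_left unitary_adj matrix_mul_assoc[symmetric])
  ultimately have nM: "norm M = norm (mat_diag (\<lambda>i. f (s i)) ** A - A ** mat_diag (\<lambda>i. f (t i)))" by simp
  have "(norm M)\<^sup>2 = fro2 (mat_diag (\<lambda>i. f (s i)) ** A - A ** mat_diag (\<lambda>i. f (t i)))"
    unfolding nM by (rule norm_sq_fro2)
  also have "\<dots> = (\<Sum>i\<in>UNIV. \<Sum>j\<in>UNIV. (f (s i) - f (t j))\<^sup>2 * (cmod (A $ i $ j))\<^sup>2)"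
    unfolding fro2_def
  proof (intro sum.cong refl)
    fix i j
    have e: "(mat_diag (\<lambda>i. f (s i)) ** A - A ** mat_diag (\<lambda>i. f (t i))) $ i $ j
             = complex_of_real (f (s i) - f (t j)) * A $ i $ j"
      by (simp add: algebra_simps)
    show "(cmod ((mat_diag (\<lambda>i. f (s i)) ** A - A ** mat_diag (\<lambda>i. f (t i))) $ i $ j))\<^sup>2 =
          (f (s i) - f (t j))\<^sup>2 * (cmod (A $ i $ j))\<^sup>2"
      unfolding e norm_mult norm_of_real by (simp add: power_mult_distrib del: of_real_diff)
  qed
  also have "\<dots> \<le> (\<Sum>i\<in>UNIV. \<Sum>j\<in>UNIV. L\<^sup>2 * ((s i - t j)\<^sup>2 * (cmod (A $ i $ j))\<^sup>2))"
  proof (intro sum_mono)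
    fix i j
    have "\<bar>f (s i) - f (t j)\<bar>\<^sup>2 \<le> (L * \<bar>s i - t j\<bar>)\<^sup>2"
      by (rule power_mono[OF lip]) simp
    hence "(f (s i) - f (t j))\<^sup>2 \<le> (L * \<bar>s i - t j\<bar>)\<^sup>2" by simp
    hence "(f (s i) - f (t j))\<^sup>2 \<le> L\<^sup>2 * (s i - t j)\<^sup>2" by (simp add: power_mult_distrib)
    thus "(f (s i) - f (t j))\<^sup>2 * (cmod (A $ i $ j))\<^sup>2 \<le> L\<^sup>2 * ((s i - t j)\<^sup>2 * (cmod (A $ i $ j))\<^sup>2)"
      by (simp add: mult.assoc[symmetric] mult_right_mono)
  qed
  also have "\<dots> = L\<^sup>2 * (\<Sum>i\<in>UNIV. \<Sum>j\<in>UNIV. (s i - t j)\<^sup>2 * (cmod (A $ i $ j))\<^sup>2)"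
    by (simp add: sum_distrib_left)
  also have "\<dots> \<le> L\<^sup>2 * (2 * (norm (x - y))\<^sup>2)"
    unfolding A_def by (intro mult_left_mono core_ineq[OF V Q Hx Hy s0 t0]) auto
  also have "\<dots> = (sqrt 2 * L * norm (x - y))\<^sup>2" by (simp add: power_mult_distrib)
  finally have "(norm M)\<^sup>2 \<le> (sqrt 2 * L * norm (x - y))\<^sup>2" .
  hence "norm M \<le> sqrt 2 * L * norm (x - y)"
    by (rule power2_le_imp_le) (use L in auto)
  thus ?thesis by (simp add: M_def)
qed

lemma sval_bound:
  fixes x V :: "complex^'n^'n"
  assumes V: "unitary_mat V" and s0: "s i \<ge> 0"
    and Hx: "mat_adj x ** x = V ** mat_diag (\<lambda>i. (s i)\<^sup>2) ** mat_adj V"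
  shows "s i \<le> norm x"
proof -
  have "mat_adj (x ** V) ** (x ** V) = mat_adj V ** (mat_adj x ** x) ** V"
    by (simp add: adj_mult matrix_mul_assoc)
  also have "\<dots> = mat_diag (\<lambda>i. (s i)\<^sup>2)"
    using V by (simp add: Hx matrix_mul_assoc unitary_D1 unit_cancel1)
  finally have "complex_of_real ((s i)\<^sup>2) = complex_of_real (\<Sum>k\<in>UNIV. (cmod ((x ** V) $ k $ i))\<^sup>2)"
    using adjM_M_diag[of "x ** V" i] by simp
  hence "(s i)\<^sup>2 = (\<Sum>k\<in>UNIV. (cmod ((x ** V) $ k $ i))\<^sup>2)" using of_real_eq_iff by blast
  also have "\<dots> = (\<Sum>k\<in>UNIV. (\<Sum>j\<in>{i}. (cmod ((x ** V) $ k $ j))\<^sup>2))" by simp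
  also have "\<dots> \<le> (\<Sum>k\<in>UNIV. (\<Sum>j\<in>UNIV. (cmod ((x ** V) $ k $ j))\<^sup>2))"
    by (intro sum_mono sum_mono2) auto
  also have "\<dots> = (norm x)\<^sup>2"
    using V by (simp add: fro2_def[symmetric] norm_sq_fro2 fro2_unitary_right)
  finally show ?thesis using s0 by (simp add: power2_le_iff_abs_le)
qed



definition Pq :: "real \<Rightarrow> complex^'n^'n \<Rightarrow> complex^'n^'n" where
  "Pq q x = psd_pow (mat_abs x) q"

lemma ham_field_Pq: "ham_field q w = Pq q w - Pq q (mat_adj w)"
  by (simp add: ham_field_def Pq_def)

lemma Pq_lip:
  fixes x y :: "complex^'n^'n"
  assumes q: "q \<ge> 1" and x: "norm x \<le> R" and y: "norm y \<le> R"
  shows "norm (Pq q x - Pq q y) \<le> sqrt 2 * (q * R powr (q - 1)) * norm (x - y)"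
proof -
  obtain V s where V: "unitary_mat V" and s0: "\<And>i. s i \<ge> 0"
    and Hx: "mat_adj x ** x = V ** mat_diag (\<lambda>i. (s i)\<^sup>2) ** mat_adj V"
    and Px: "Pq q x = V ** mat_diag (\<lambda>i. s i powr q) ** mat_adj V"
    using abs_pow_diag[of q x] q unfolding Pq_def by auto
  obtain Q t where Q: "unitary_mat Q" and t0: "\<And>i. t i \<ge> 0"
    and Hy: "mat_adj y ** y = Q ** mat_diag (\<lambda>i. (t i)\<^sup>2) ** mat_adj Q"
    and Py: "Pq q y = Q ** mat_diag (\<lambda>i. t i powr q) ** mat_adj Q"
    using abs_pow_diag[of q y] q unfolding Pq_def by auto
  have sR: "s i \<le> R" for i by (rule order_trans[OF sval_bound[OF V s0 Hx] x])
  have tR: "t i \<le> R" for i by (rule order_trans[OF sval_bound[OF Q t0 Hy] y])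
  have L: "0 \<le> q * R powr (q - 1)" using q by simp
  show ?thesis unfolding Px Py
    by (rule fc_lip[OF V Q Hx Hy s0 t0 L, of "\<lambda>a. a powr q"])
       (rule powr_lip[OF q s0 sR t0 tR])
qed

lemma F_lip:
  fixes x y :: "complex^'n^'n"
  assumes q: "q \<ge> 1" and x: "norm x \<le> R" and y: "norm y \<le> R"
  shows "norm (ham_field q x - ham_field q y) \<le> 2 * sqrt 2 * (q * R powr (q - 1)) * norm (x - y)"
proof -
  have "norm (ham_field q x - ham_field q y) \<le>
        norm (Pq q x - Pq q y) + norm (Pq q (mat_adj x) - Pq q (mat_adj y))"
    unfolding ham_field_Pq by (rule order_trans[OF _ norm_triangle_ineq4]) (simp add: algebra_simps)
  also have "\<dots> \<le> sqrt 2 * (q * R powr (q - 1)) * norm (x - y) + sqrt 2 * (q * R powr (q - 1)) * norm (x - y)"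
  proof (intro add_mono Pq_lip[OF q x y])
    have "norm (Pq q (mat_adj x) - Pq q (mat_adj y)) \<le> sqrt 2 * (q * R powr (q - 1)) * norm (mat_adj x - mat_adj y)"
      using q x y by (intro Pq_lip) auto
    also have "norm (mat_adj x - mat_adj y) = norm (x - y)" by (metis adj_diff norm_adj)
    finally show "norm (Pq q (mat_adj x) - Pq q (mat_adj y)) \<le> sqrt 2 * (q * R powr (q - 1)) * norm (x - y)" .
  qed
  finally show ?thesis by (simp add: algebra_simps)
qed

lemma F_zero: "ham_field q 0 = 0"
  by (simp add: ham_field_def)

lemma inner_tr: "inner A (B :: complex^'n^'n) = Re (tr (mat_adj B ** A))"
  unfolding inner_vec_def tr_def mmult_nth
  by (subst sum.swap) (simp add: Re_sum inner_complex_def mult.commute)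

lemma adj_Pq: "q > 0 \<Longrightarrow> mat_adj (Pq q x) = Pq q x"
proof -
  assume q: "q > 0"
  obtain V s where "Pq q x = V ** mat_diag (\<lambda>i. s i powr q) ** mat_adj V"
    using abs_pow_diag[of q x] q unfolding Pq_def by blast
  thus ?thesis by (simp add: adj_mult matrix_mul_assoc)
qed

lemma Pq_intertwine:
  fixes w :: "complex^'n^'n"
  assumes q: "q > 0"
  shows "Pq q (mat_adj w) ** w = w ** Pq q w"
proof -
  obtain V s where V: "unitary_mat V" and s0: "\<And>i. s i \<ge> 0"
    and Hx: "mat_adj w ** w = V ** mat_diag (\<lambda>i. (s i)\<^sup>2) ** mat_adj V"
    and Px: "Pq q w = V ** mat_diag (\<lambda>i. s i powr q) ** mat_adj V"
    using abs_pow_diag[of q w] q unfolding Pq_def by auto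
  obtain U t where U: "unitary_mat U" and t0: "\<And>i. t i \<ge> 0"
    and Hy: "mat_adj (mat_adj w) ** mat_adj w = U ** mat_diag (\<lambda>i. (t i)\<^sup>2) ** mat_adj U"
    and Py: "Pq q (mat_adj w) = U ** mat_diag (\<lambda>i. t i powr q) ** mat_adj U"
    using abs_pow_diag[of q "mat_adj w"] q unfolding Pq_def by auto
  have "(U ** mat_diag (\<lambda>i. (t i)\<^sup>2) ** mat_adj U) ** w = w ** (V ** mat_diag (\<lambda>i. (s i)\<^sup>2) ** mat_adj V)"
  proof -
    have e: "(w ** mat_adj w) ** w = w ** (mat_adj w ** w)" by (simp add: matrix_mul_assoc)
    have Hy': "w ** mat_adj w = U ** mat_diag (\<lambda>i. (t i)\<^sup>2) ** mat_adj U" using Hy by simp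
    show ?thesis using e unfolding Hx Hy' .
  qed
  from fc_intertwine[OF U V this, of "\<lambda>a. sqrt a powr q"]
  show ?thesis unfolding Px Py using s0 t0 by simp
qed

lemma F_orth:
  fixes w :: "complex^'n^'n"
  assumes q: "q > 0"
  shows "inner w (ham_field q w) = 0"
proof -
  have "tr (mat_adj (ham_field q w) ** w) = tr (Pq q w ** w) - tr (Pq q (mat_adj w) ** w)"
    unfolding ham_field_Pq using q by (simp add: adj_Pq mm_diff_r tr_diff)
  also have "tr (Pq q (mat_adj w) ** w) = tr (Pq q w ** w)"
    unfolding Pq_intertwine[OF q] by (rule tr_comm)
  finally show ?thesis by (simp add: inner_tr)
qed



definition prim :: "(real \<Rightarrow> 'a::banach) \<Rightarrow> real \<Rightarrow> 'a" where
  "prim g t = (if 0 \<le> t then integral {0..t} g else - integral {t..0} g)"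

lemma prim_0[simp]: "prim g 0 = 0"
  by (simp add: prim_def)

lemma cont_integrable: "continuous_on UNIV g \<Longrightarrow> g integrable_on {a..b}" for g :: "real \<Rightarrow> 'a::banach"
  by (rule integrable_continuous_real) (rule continuous_on_subset, auto)

lemma prim_eq:
  fixes g :: "real \<Rightarrow> 'a::banach"
  assumes g: "continuous_on UNIV g" and a: "a \<le> 0" "a \<le> t"
  shows "prim g t = integral {a..t} g - integral {a..0} g"
proof (cases "0 \<le> t")
  case True
  have "integral {a..0} g + integral {0..t} g = integral {a..t} g"
    using a True by (intro Henstock_Kurzweil_Integration.integral_combine cont_integrable g)
  thus ?thesis using True by (simp add: prim_def algebra_simps)
next
  case False
  have "integral {a..t} g + integral {t..0} g = integral {a..0} g"
    using a False by (intro Henstock_Kurzweil_Integration.integral_combine cont_integrable g) auto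
  thus ?thesis using False by (simp add: prim_def algebra_simps)
qed

lemma prim_deriv:
  fixes g :: "real \<Rightarrow> 'a::banach"
  assumes g: "continuous_on UNIV g"
  shows "(prim g has_vector_derivative g t) (at t)"
proof -
  define a where "a = - (\<bar>t\<bar> + 1)"
  define b where "b = \<bar>t\<bar> + 1"
  have tab: "t \<in> {a<..<b}" by (auto simp: a_def b_def)
  have "((\<lambda>u. integral {a..u} g) has_vector_derivative g t) (at t within {a..b})"
    using tab by (intro integral_has_vector_derivative continuous_on_subset[OF g]) auto
  moreover have "at t within {a..b} = at t"
    using tab by (intro at_within_interior) auto
  ultimately have "((\<lambda>u. integral {a..u} g) has_vector_derivative g t) (at t)" by simp
  hence "((\<lambda>u. integral {a..u} g - integral {a..0} g) has_vector_derivative g t - 0) (at t)"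
    by (intro derivative_intros)
  hence D: "((\<lambda>u. integral {a..u} g - integral {a..0} g) has_vector_derivative g t) (at t)" by simp
  show ?thesis
    by (rule has_vector_derivative_transform_within_open[OF D _ tab])
       (use g in \<open>auto simp: a_def b_def intro!: prim_eq[symmetric]\<close>)
qed

lemma prim_cont: "continuous_on UNIV g \<Longrightarrow> continuous_on UNIV (prim g)"
  for g :: "real \<Rightarrow> 'a::banach"
  using prim_deriv
  by (metis continuous_at_imp_continuous_on has_vector_derivative_continuous)

lemma prim_diff:
  fixes g1 g2 :: "real \<Rightarrow> 'a::banach"
  assumes "continuous_on UNIV g1" "continuous_on UNIV g2"
  shows "prim (\<lambda>s. g1 s - g2 s) t = prim g1 t - prim g2 t"
  using assms
  by (simp add: prim_def Henstock_Kurzweil_Integration.integral_diff cont_integrable)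

lemma exp_integral_pos:
  fixes c \<delta> t :: real
  assumes c: "c > 0" and t: "0 \<le> t"
  shows "((\<lambda>s. \<delta> * exp (c * s)) has_integral (\<delta> * (exp (c * t) - 1) / c)) {0..t}"
proof -
  have "((\<lambda>s. \<delta> * exp (c * s)) has_integral ((\<lambda>s. \<delta> / c * exp (c * s)) t - (\<lambda>s. \<delta> / c * exp (c * s)) 0)) {0..t}"
    using t c
    by (intro fundamental_theorem_of_calculus)
       (auto intro!: derivative_eq_intros simp: has_real_derivative_iff_has_vector_derivative[symmetric])
  thus ?thesis using c by (simp add: field_simps)
qed

lemma exp_integral_neg:
  fixes c \<delta> t :: real
  assumes c: "c > 0" and t: "t \<le> 0"
  shows "((\<lambda>s. \<delta> * exp (- c * s)) has_integral (\<delta> * (exp (- c * t) - 1) / c)) {t..0}"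
proof -
  have "((\<lambda>s. \<delta> * exp (- c * s)) has_integral ((\<lambda>s. - \<delta> / c * exp (- c * s)) 0 - (\<lambda>s. - \<delta> / c * exp (- c * s)) t)) {t..0}"
    using t c
    by (intro fundamental_theorem_of_calculus)
       (auto intro!: derivative_eq_intros simp: has_real_derivative_iff_has_vector_derivative[symmetric])
  thus ?thesis using c by (simp add: field_simps)
qed

lemma prim_bound:
  fixes g :: "real \<Rightarrow> 'a::euclidean_space"
  assumes g: "continuous_on UNIV g" and c: "c > 0"
    and b: "\<And>s. norm (g s) \<le> \<delta> * exp (c * \<bar>s\<bar>)"
  shows "norm (prim g t) \<le> \<delta> * (exp (c * \<bar>t\<bar>) - 1) / c"
proof (cases "0 \<le> t")
  case True
  have "norm (integral {0..t} g) \<le> integral {0..t} (\<lambda>s. \<delta> * exp (c * s))"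
  proof (rule Henstock_Kurzweil_Integration.integral_norm_bound_integral)
    show "g integrable_on {0..t}" by (rule cont_integrable[OF g])
    show "(\<lambda>s. \<delta> * exp (c * s)) integrable_on {0..t}"
      using exp_integral_pos[OF c True, of \<delta>] by (rule has_integral_integrable)
    show "norm (g x) \<le> \<delta> * exp (c * x)" if "x \<in> {0..t}" for x
      using b[of x] that by simp
  qed
  also have "\<dots> = \<delta> * (exp (c * t) - 1) / c"
    using exp_integral_pos[OF c True, of \<delta>] by (rule integral_unique)
  finally show ?thesis using True by (simp add: prim_def)
next
  case False
  have "norm (integral {t..0} g) \<le> integral {t..0} (\<lambda>s. \<delta> * exp (- c * s))"
  proof (rule Henstock_Kurzweil_Integration.integral_norm_bound_integral)
    show "g integrable_on {t..0}" by (rule cont_integrable[OF g])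
    show "(\<lambda>s. \<delta> * exp (- c * s)) integrable_on {t..0}"
      using exp_integral_neg[OF c, of t \<delta>] False by (intro has_integral_integrable) simp
    show "norm (g x) \<le> \<delta> * exp (- c * x)" if "x \<in> {t..0}" for x
      using b[of x] that by simp
  qed
  also have "\<dots> = \<delta> * (exp (- c * t) - 1) / c"
    using exp_integral_neg[OF c, of t \<delta>] False by (intro integral_unique) simp
  finally show ?thesis using False by (simp add: prim_def)
qed



lemma ode_exuniq:
  fixes G :: "'a::euclidean_space \<Rightarrow> 'a" and w0 :: 'a
  assumes K: "K > 0" and lip: "\<And>x y. norm (G x - G y) \<le> K * norm (x - y)"
    and bnd: "\<And>x. norm (G x) \<le> B"
  shows "\<exists>!w. (\<forall>t. (w has_vector_derivative G (w t)) (at t)) \<and> w 0 = w0"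
proof -
  define c where "c = 2 * K"
  have c: "c > 0" using K by (simp add: c_def)
  define e where "e t = exp (c * \<bar>t\<bar>)" for t
  have e_pos: "e t > 0" for t by (simp add: e_def)
  have e_ge1: "e t \<ge> 1" for t using c by (simp add: e_def)
  have e_cont: "continuous_on UNIV e" unfolding e_def by (intro continuous_intros)
  have B0: "B \<ge> 0" using bnd[of 0] norm_ge_zero order_trans by blast
  have contG: "continuous_on UNIV G"
  proof (rule lipschitz_on_continuous_on)
    show "K-lipschitz_on UNIV G"
      by (rule lipschitz_onI) (use lip K in \<open>auto simp: dist_norm\<close>)
  qed
  have contGh: "continuous_on UNIV (\<lambda>s. G (h s))" if "continuous_on UNIV h" for h
    using continuous_on_compose2[OF contG that] by simp
  define T where "T h t = (1 / e t) *\<^sub>R (w0 + prim (\<lambda>s. G (h s)) t)" for h t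
  have T_mem: "T h \<in> bcontfun" if h: "continuous_on UNIV h" for h
  proof (rule bcontfun_normI)
    show "continuous_on UNIV (T h)" unfolding T_def
      by (intro continuous_intros prim_cont contGh h e_cont) (auto simp: e_def)
    show "norm (T h t) \<le> norm w0 + B / c" for t
    proof -
      have pb: "norm (prim (\<lambda>s. G (h s)) t) \<le> B * (e t - 1) / c"
        unfolding e_def using bnd B0 c
        by (intro prim_bound contGh h) (auto intro: order_trans[OF _ mult_left_mono[of 1]])
      have "norm (T h t) = (1 / e t) * norm (w0 + prim (\<lambda>s. G (h s)) t)"
        using e_pos[of t] by (simp add: T_def)
      also have "\<dots> \<le> (1 / e t) * (norm w0 + B * (e t - 1) / c)"
        using e_pos[of t] pb by (intro mult_left_mono order_trans[OF norm_triangle_ineq]) auto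
      also have "\<dots> = norm w0 / e t + (B / c) * ((e t - 1) / e t)"
        using e_pos[of t] c by (simp add: field_simps)
      also have "\<dots> \<le> norm w0 + (B / c) * 1"
        using e_pos[of t] e_ge1[of t] B0 c mult_left_mono[OF e_ge1[of t] norm_ge_zero[of w0]]
        by (intro add_mono mult_left_mono) (auto simp: field_simps)
      finally show ?thesis by simp
    qed
  qed
  define \<Psi> where "\<Psi> u = Bcontfun (T (\<lambda>s. e s *\<^sub>R apply_bcontfun u s))" for u
  have cont_u: "continuous_on UNIV (\<lambda>s. e s *\<^sub>R apply_bcontfun u s)" for u :: "real \<Rightarrow>\<^sub>C 'a"
    by (rule continuous_on_scaleR[OF e_cont continuous_on_apply_bcontfun])
  have \<Psi>_apply: "apply_bcontfun (\<Psi> u) t = T (\<lambda>s. e s *\<^sub>R apply_bcontfun u s) t" for u t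
    unfolding \<Psi>_def by (simp add: Bcontfun_inverse[OF T_mem[OF cont_u]])
  have contr: "dist (\<Psi> u) (\<Psi> v) \<le> (1/2) * dist u v" for u v
  proof (rule dist_bound)
    fix t
    define d where "d = dist u v"
    define gu where "gu s = G (e s *\<^sub>R apply_bcontfun u s)" for s
    define gv where "gv s = G (e s *\<^sub>R apply_bcontfun v s)" for s
    have cgu: "continuous_on UNIV gu" unfolding gu_def by (rule contGh[OF cont_u])
    have cgv: "continuous_on UNIV gv" unfolding gv_def by (rule contGh[OF cont_u])
    have gb: "norm (gu s - gv s) \<le> (K * d) * exp (c * \<bar>s\<bar>)" for s
    proof -
      have "norm (gu s - gv s) \<le> K * norm (e s *\<^sub>R apply_bcontfun u s - e s *\<^sub>R apply_bcontfun v s)"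
        unfolding gu_def gv_def by (rule lip)
      also have "\<dots> = K * (e s * dist (apply_bcontfun u s) (apply_bcontfun v s))"
        using e_pos[of s] by (simp add: dist_norm flip: scaleR_diff_right)
      also have "\<dots> \<le> K * (e s * d)"
        using K e_pos[of s] unfolding d_def by (intro mult_left_mono dist_bounded) auto
      finally show ?thesis by (simp add: e_def mult_ac)
    qed
    have "dist (apply_bcontfun (\<Psi> u) t) (apply_bcontfun (\<Psi> v) t)
          = (1 / e t) * norm (prim gu t - prim gv t)"
      using e_pos[of t] unfolding \<Psi>_apply T_def dist_norm gu_def gv_def
      by (simp flip: scaleR_diff_right)
    also have "prim gu t - prim gv t = prim (\<lambda>s. gu s - gv s) t"
      by (rule prim_diff[OF cgu cgv, symmetric])
    also have "(1 / e t) * norm (prim (\<lambda>s. gu s - gv s) t) \<le> (1 / e t) * ((K * d) * (e t - 1) / c)"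
      using e_pos[of t] unfolding e_def
      by (intro mult_left_mono prim_bound gb c continuous_intros cgu cgv) auto
    also have "\<dots> = (d / 2) * ((e t - 1) / e t)"
      using K e_pos[of t] by (simp add: c_def field_simps)
    also have "\<dots> \<le> (d / 2) * 1"
      using e_pos[of t] unfolding d_def by (intro mult_left_mono) auto
    finally show "dist (apply_bcontfun (\<Psi> u) t) (apply_bcontfun (\<Psi> v) t) \<le> 1 / 2 * dist u v"
      by (simp add: d_def)
  qed
  have "\<exists>!u. \<Psi> u = u"
    by (rule banach_fix_type[of "1/2"]) (use contr in auto)
  then obtain u where fix_u: "\<Psi> u = u" and uniq_u: "\<And>v. \<Psi> v = v \<Longrightarrow> v = u"
    by blast
  define w where "w t = e t *\<^sub>R apply_bcontfun u t" for t
  have wc: "continuous_on UNIV w" unfolding w_def by (rule cont_u)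
  have w_eq: "w t = w0 + prim (\<lambda>s. G (w s)) t" for t
  proof -
    have "apply_bcontfun u t = T (\<lambda>s. e s *\<^sub>R apply_bcontfun u s) t"
      using \<Psi>_apply[of u t] unfolding fix_u .
    also have "(\<lambda>s. e s *\<^sub>R apply_bcontfun u s) = w" by (simp add: w_def fun_eq_iff)
    finally have "apply_bcontfun u t = T w t" .
    hence "w t = e t *\<^sub>R T w t" by (simp add: w_def)
    thus ?thesis using e_pos[of t] by (simp add: T_def)
  qed
  have sol: "\<And>v. (\<forall>t. (v has_vector_derivative G (v t)) (at t)) \<and> v 0 = w0 \<Longrightarrow> v = w"
  proof -
    fix v assume v: "(\<forall>t. (v has_vector_derivative G (v t)) (at t)) \<and> v 0 = w0"
    have vc: "continuous_on UNIV v"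
      using v by (metis continuous_at_imp_continuous_on has_vector_derivative_continuous)
    have "\<exists>k. \<forall>t\<in>UNIV. v t - prim (\<lambda>s. G (v s)) t = k"
    proof (rule has_vector_derivative_zero_constant[of UNIV])
      fix t
      have "((\<lambda>t. v t - prim (\<lambda>s. G (v s)) t) has_vector_derivative G (v t) - G (v t)) (at t)"
        using v prim_deriv[OF contGh[OF vc]] by (intro derivative_intros) auto
      thus "((\<lambda>t. v t - prim (\<lambda>s. G (v s)) t) has_vector_derivative 0) (at t within UNIV)" by simp
    qed auto
    then obtain k where "\<And>t. v t - prim (\<lambda>s. G (v s)) t = k" by blast
    hence v_eq: "v t = w0 + prim (\<lambda>s. G (v s)) t" for t
      using v by (metis add_diff_cancel diff_add_cancel prim_0 diff_zero)
    define uv where "uv = Bcontfun (T v)"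
    have uv_apply: "apply_bcontfun uv t = T v t" for t
      unfolding uv_def by (simp add: Bcontfun_inverse[OF T_mem[OF vc]])
    have e_uv: "e t *\<^sub>R apply_bcontfun uv t = v t" for t
      using e_pos[of t] unfolding uv_apply T_def by (simp add: v_eq[symmetric])
    have ev: "(\<lambda>s. e s *\<^sub>R apply_bcontfun uv s) = v" by (rule ext) (rule e_uv)
    have "\<Psi> uv = uv"
      by (rule bcontfun_eqI) (unfold \<Psi>_apply ev, unfold uv_apply, rule refl)
    hence "uv = u" by (rule uniq_u)
    show "v = w"
    proof
      fix t show "v t = w t" using e_uv[of t] by (simp add: w_def \<open>uv = u\<close>)
    qed
  qed
  have "(\<forall>t. (w has_vector_derivative G (w t)) (at t)) \<and> w 0 = w0"
  proof
    show "\<forall>t. (w has_vector_derivative G (w t)) (at t)"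
    proof
      fix t
      have "((\<lambda>t. w0 + prim (\<lambda>s. G (w s)) t) has_vector_derivative 0 + G (w t)) (at t)"
        by (rule has_vector_derivative_add[OF has_vector_derivative_const prim_deriv[OF contGh[OF wc]]])
      moreover have "(\<lambda>t. w0 + prim (\<lambda>s. G (w s)) t) = w" by (rule ext) (rule w_eq[symmetric])
      ultimately show "(w has_vector_derivative G (w t)) (at t)" by simp
    qed
    show "w 0 = w0" using w_eq[of 0] by (simp only: prim_0 add_0_right)
  qed
  thus ?thesis using sol by blast
qed



lemma conserve:
  fixes v :: "real \<Rightarrow> 'a::real_inner" and H :: "'a \<Rightarrow> 'a"
  assumes d: "\<And>t. (v has_vector_derivative H (v t)) (at t)"
    and orth: "\<And>t. inner (v t) (H (v t)) = 0"
  shows "norm (v t) = norm (v 0)"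
proof -
  have "\<exists>c. \<forall>t\<in>UNIV. inner (v t) (v t) = c"
  proof (rule has_derivative_zero_constant)
    fix t :: real
    have "((\<lambda>t. inner (v t) (v t)) has_derivative
           (\<lambda>h. inner (v t) (h *\<^sub>R H (v t)) + inner (h *\<^sub>R H (v t)) (v t))) (at t within UNIV)"
      using d[of t] unfolding has_vector_derivative_def by (intro has_derivative_inner) auto
    moreover have "(\<lambda>h. inner (v t) (h *\<^sub>R H (v t)) + inner (h *\<^sub>R H (v t)) (v t)) = (\<lambda>h. 0)"
      using orth[of t] by (simp add: inner_commute fun_eq_iff)
    ultimately show "((\<lambda>t. inner (v t) (v t)) has_derivative (\<lambda>h. 0)) (at t within UNIV)" by simp
  qed auto
  then obtain c where "\<And>t. inner (v t) (v t) = c" by blast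
  hence "(norm (v t))\<^sup>2 = (norm (v 0))\<^sup>2" by (simp add: power2_norm_eq_inner)
  thus ?thesis by (simp add: power2_eq_iff_nonneg)
qed

theorem theorem2p3:
  fixes n :: nat and p q :: real and w0 :: "complex^'N^'N"
  assumes "n \<ge> 1" and "p = 2 * real n" and "q = p / (p - 1)"
  shows "\<exists>!w :: real \<Rightarrow> complex^'N^'N.
           (\<forall>t. (w has_vector_derivative ham_field q (w t)) (at t)) \<and>
           continuous_on UNIV (\<lambda>t. vector_derivative w (at t)) \<and>
           w 0 = w0"
proof -
  have p2: "p \<ge> 2" using assms by simp
  have pm: "p - 1 > 0" using p2 by simp
  have q1: "q \<ge> 1" unfolding assms(3) using pm by (simp add: le_divide_eq)
  have q0: "q > 0" using q1 by simp
  define F :: "complex^'N^'N \<Rightarrow> complex^'N^'N" where "F = ham_field q"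
  define R where "R = norm w0"
  have R0: "R \<ge> 0" by (simp add: R_def)
  define L where "L = 2 * sqrt 2 * (q * R powr (q - 1))"
  have L0: "L \<ge> 0" using q1 by (simp add: L_def)
  have Flip: "norm (F x - F y) \<le> L * norm (x - y)" if "norm x \<le> R" "norm y \<le> R" for x y
    unfolding F_def L_def by (rule F_lip[OF q1 that])
  define clip :: "complex^'N^'N \<Rightarrow> complex^'N^'N"
    where "clip x = (if norm x \<le> R then x else (R / norm x) *\<^sub>R x)" for x
  have clip_norm: "norm (clip x) \<le> R" for x
    using R0 by (auto simp: clip_def)
  have clip_id: "norm x \<le> R \<Longrightarrow> clip x = x" for x by (simp add: clip_def)
  have clip_lip: "norm (clip x - clip y) \<le> 2 * norm (x - y)" for x y
  proof -
    have aux: "norm ((R / norm x) *\<^sub>R x - y) \<le> 2 * norm (x - y)" if "norm x > R" "norm y \<le> R" for x y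
    proof -
      have "norm ((R / norm x) *\<^sub>R x - y) \<le> norm ((R / norm x) *\<^sub>R x - x) + norm (x - y)"
        by (rule order_trans[OF _ norm_triangle_ineq]) simp
      also have "norm ((R / norm x) *\<^sub>R x - x) = norm x - R"
      proof -
        have "(R / norm x) *\<^sub>R x - x = (R / norm x - 1) *\<^sub>R x" by (simp add: algebra_simps)
        also have "norm \<dots> = \<bar>R / norm x - 1\<bar> * norm x" by simp
        also have "\<dots> = norm x - R"
        proof -
          have nx: "norm x > 0" using that R0 by linarith
          hence "\<bar>R / norm x - 1\<bar> = 1 - R / norm x" using that by (simp add: abs_if field_simps)
          thus ?thesis using nx by (simp add: field_simps)
        qed
        finally show ?thesis .
      qed
      also have "norm x - R \<le> norm (x - y)"
        using that norm_triangle_ineq2[of x y] by linarith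
      finally show ?thesis by simp
    qed
    show ?thesis
    proof (cases "norm x \<le> R"; cases "norm y \<le> R")
      assume "norm x \<le> R" "norm y \<le> R" thus ?thesis by (simp add: clip_def)
    next
      assume "\<not> norm x \<le> R" "norm y \<le> R" thus ?thesis using aux[of x y] by (simp add: clip_def)
    next
      assume "norm x \<le> R" "\<not> norm y \<le> R"
      thus ?thesis using aux[of y x] by (simp add: clip_def norm_minus_commute)
    next
      assume nx: "\<not> norm x \<le> R" and ny: "\<not> norm y \<le> R"
      have px: "norm x > 0" "norm y > 0" using nx ny R0 by auto
      have "(R / norm x) *\<^sub>R x - (R / norm y) *\<^sub>R y =
            (R / norm x) *\<^sub>R (x - y) + (R * (1 / norm x - 1 / norm y)) *\<^sub>R y"
        by (simp add: algebra_simps)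
      hence "norm ((R / norm x) *\<^sub>R x - (R / norm y) *\<^sub>R y) \<le>
             (R / norm x) * norm (x - y) + R * \<bar>1 / norm x - 1 / norm y\<bar> * norm y"
        using R0 px by (metis (no_types, lifting) abs_mult abs_of_nonneg divide_nonneg_nonneg norm_ge_zero
            norm_scaleR norm_triangle_ineq)
      also have "R * \<bar>1 / norm x - 1 / norm y\<bar> * norm y = (R / norm x) * \<bar>norm y - norm x\<bar>"
        using px by (simp add: field_simps abs_div[symmetric] abs_mult_pos)
      also have "\<bar>norm y - norm x\<bar> \<le> norm (x - y)"
        by (metis norm_minus_commute norm_triangle_ineq3)
      hence "(R / norm x) * norm (x - y) + (R / norm x) * \<bar>norm y - norm x\<bar> \<le> 1 * norm (x - y) + 1 * norm (x - y)"
        using px nx R0 by (intro add_mono mult_mono) auto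
      finally show ?thesis using nx ny by (simp add: clip_def)
    qed
  qed
  define G where "G x = F (clip x)" for x
  define K where "K = 2 * L + 1"
  have K: "K > 0" using L0 by (simp add: K_def)
  have Glip: "norm (G x - G y) \<le> K * norm (x - y)" for x y
  proof -
    have "norm (G x - G y) \<le> L * norm (clip x - clip y)"
      unfolding G_def by (rule Flip[OF clip_norm clip_norm])
    also have "\<dots> \<le> L * (2 * norm (x - y))" by (intro mult_left_mono clip_lip L0)
    also have "\<dots> \<le> K * norm (x - y)" by (simp add: K_def algebra_simps)
    finally show ?thesis .
  qed
  have F0: "F 0 = 0" by (simp add: F_def F_zero)
  have Gbnd: "norm (G x) \<le> L * R" for x
  proof -
    have "norm (G x) = norm (F (clip x) - F 0)" by (simp add: G_def F0)
    also have "\<dots> \<le> L * norm (clip x - 0)" by (rule Flip[OF clip_norm]) (simp add: R0)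
    also have "\<dots> \<le> L * R" using clip_norm[of x] L0 by (simp add: mult_left_mono)
    finally show ?thesis .
  qed
  have Forth: "inner x (F x) = 0" for x unfolding F_def by (rule F_orth[OF q0])
  have Gorth: "inner x (G x) = 0" for x
  proof (cases "norm x \<le> R")
    case True thus ?thesis by (simp add: G_def clip_def Forth)
  next
    case False
    hence nx: "norm x > 0" using R0 by linarith
    define c where "c = R / norm x"
    show ?thesis
    proof (cases "c = 0")
      case True thus ?thesis using False by (simp add: G_def clip_def c_def[symmetric] F0)
    next
      case c: False
      have "inner x (G x) = (1 / c) * inner (c *\<^sub>R x) (F (c *\<^sub>R x))"
        using False c by (simp add: G_def clip_def c_def[symmetric])
      thus ?thesis by (simp add: Forth)
    qed
  qed
  have GF: "norm x = R \<Longrightarrow> G x = F x" for x by (simp add: G_def clip_id)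
  have contG: "continuous_on UNIV G"
  proof (rule lipschitz_on_continuous_on)
    show "K-lipschitz_on UNIV G"
      by (rule lipschitz_onI) (use Glip K in \<open>auto simp: dist_norm\<close>)
  qed
  from ode_exuniq[OF K Glip Gbnd, of w0]
  obtain w where wsol: "(\<forall>t. (w has_vector_derivative G (w t)) (at t)) \<and> w 0 = w0"
    and wuniq: "\<And>v. (\<forall>t. (v has_vector_derivative G (v t)) (at t)) \<and> v 0 = w0 \<Longrightarrow> v = w"
    by metis
  have wnorm: "norm (w t) = R" for t
    using conserve[of w G t] wsol Gorth by (simp add: R_def)
  have wF: "(w has_vector_derivative F (w t)) (at t)" for t
    using wsol wnorm GF by metis
  have wvd: "vector_derivative w (at t) = G (w t)" for t
    using wsol vector_derivative_at by blast
  have wc: "continuous_on UNIV w"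
    using wsol by (metis continuous_at_imp_continuous_on has_vector_derivative_continuous)
  have cvd: "continuous_on UNIV (\<lambda>t. vector_derivative w (at t))"
    unfolding wvd using continuous_on_compose2[OF contG wc] by simp
  show ?thesis
  proof (rule ex1I[of _ w])
    show "(\<forall>t. (w has_vector_derivative ham_field q (w t)) (at t)) \<and>
          continuous_on UNIV (\<lambda>t. vector_derivative w (at t)) \<and> w 0 = w0"
      using wF cvd wsol by (simp add: F_def)
  next
    fix v assume v: "(\<forall>t. (v has_vector_derivative ham_field q (v t)) (at t)) \<and>
          continuous_on UNIV (\<lambda>t. vector_derivative v (at t)) \<and> v 0 = w0"
    have vd: "(v has_vector_derivative F (v t)) (at t)" for t using v by (simp add: F_def)
    have vnorm: "norm (v t) = R" for t
      using conserve[of v F t] vd Forth v by (simp add: R_def)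
    have "(\<forall>t. (v has_vector_derivative G (v t)) (at t)) \<and> v 0 = w0"
      using vd vnorm GF v by metis
    thus "v = w" by (rule wuniq)
  qed
qed


end
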